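(* The influence (objective) function of the DIME problem is not adaptive submodular: there exist a DIME instance (an uncertain network with existence probabilities $u$, propagation probabilities $p$, and horizon $L$), partial realizations $\psi\subseteq\psi'$, and a node $v$ such that $\Delta(v\mid\psi)<\Delta(v\mid\psi')$.
   Context: An uncertain network is a directed graph $G=(V,E)$ whose edge set is the disjoint union of certain edges $E_c$ and uncertain edges $E_u$; each $e\in E_u$ exists independently with probability $u(e)$, and each $e\in E$ has a propagation probability $p(e)$. Influence model: influenced nodes stay influenced forever; at each time step, every influenced node $x$ independently tries to influence each not-yet-influenced out-neighbour $y$ along an existing edge $(x,y)$, succeeding with probability $p(x,y)$; failed attempts are repeated in every subsequent time step. A realization $\Phi$ specifies, for every uncertain edge, whether it exists. For a set $S\subseteq V$ of selected nodes, $f(S,\Phi)$ denotes the expected number of nodes influenced after $L$ time steps of spread starting from $S$ (all of $S$ influenced initially) in the network given by $\Phi$, with expectation over the propagation randomness. Selecting a node reveals (observes) the existence states of all uncertain edges leaving that node. A partial realization $\psi$ consists of a set $\mathrm{dom}(\psi)$ of selected nodes together with the observed states of the uncertain edges leaving them; $\Phi\sim\psi$ means $\Phi$ is consistent with these observations; $\psi\subseteq\psi'$ means $\mathrm{dom}(\psi)\subseteq\mathrm{dom}(\psi')$ and the observations agree. The conditional expected marginal benefit is $\Delta(v\mid\psi)=\mathbb{E}_{\Phi}[f(\mathrm{dom}(\psi)\cup\{v\},\Phi)-f(\mathrm{dom}(\psi),\Phi)\mid \Phi\sim\psi]$, with $\Phi$ drawn from the edge-existence distribution. The function is adaptive submodular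 (Golovin–Krause) if $\Delta(v\mid\psi)\ge\Delta(v\mid\psi')$ for all $\psi\subseteq\psi'$ and all $v$. *)

theory Defs
  imports Main Complex_Main
begin

definition step_prob :: "('a \<times> 'a) set \<Rightarrow> ('a \<times> 'a \<Rightarrow> real) \<Rightarrow> 'a set \<Rightarrow> 'a \<Rightarrow> real" where
  "step_prob E p A y = 1 - (\<Prod>x\<in>{x\<in>A. (x, y) \<in> E}. 1 - p (x, y))"

definition trans_prob :: "'a set \<Rightarrow> ('a \<times> 'a) set \<Rightarrow> ('a \<times> 'a \<Rightarrow> real) \<Rightarrow> 'a set \<Rightarrow> 'a set \<Rightarrow> real" where
  "trans_prob V E p A B =
     (if A \<subseteq> B \<and> B \<subseteq> V
      then (\<Prod>y\<in>B - A. step_prob E p A y) * (\<Prod>y\<in>V - B. 1 - step_prob E p A y)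
      else 0)"

fun spread_dist :: "'a set \<Rightarrow> ('a \<times> 'a) set \<Rightarrow> ('a \<times> 'a \<Rightarrow> real) \<Rightarrow> nat \<Rightarrow> 'a set \<Rightarrow> 'a set \<Rightarrow> real" where
  "spread_dist V E p 0 S B = (if B = S then 1 else 0)"
| "spread_dist V E p (Suc t) S B = (\<Sum>A\<in>Pow V. spread_dist V E p t S A * trans_prob V E p A B)"

(* f(S, Phi): expected number of influenced nodes after L steps in the network
   whose existing edges are Ec \<union> Phi (Phi = set of existing uncertain edges). *)
definition influence :: "'a set \<Rightarrow> ('a \<times> 'a) set \<Rightarrow> ('a \<times> 'a \<Rightarrow> real) \<Rightarrow> nat \<Rightarrow> ('a \<times> 'a) set \<Rightarrow> 'a set \<Rightarrow> real" where
  "influence V Ec p L Phi S = (\<Sum>B\<in>Pow V. spread_dist V (Ec \<union> Phi) p L S B * real (card B))"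

definition real_prob :: "('a \<times> 'a) set \<Rightarrow> ('a \<times> 'a \<Rightarrow> real) \<Rightarrow> ('a \<times> 'a) set \<Rightarrow> real" where
  "real_prob Eu u Phi = (\<Prod>e\<in>Phi. u e) * (\<Prod>e\<in>Eu - Phi. 1 - u e)"

(* A partial realization is a pair (D, O): D = dom(psi) the selected nodes,
   O = the observed-existing uncertain edges leaving D (the other uncertain edges
   leaving D are observed absent). *)
definition consistent :: "('a \<times> 'a) set \<Rightarrow> 'a set \<times> ('a \<times> 'a) set \<Rightarrow> ('a \<times> 'a) set \<Rightarrow> bool" where
  "consistent Eu psi Phi \<longleftrightarrow> Phi \<subseteq> Eu \<and>
     (\<forall>e\<in>Eu. fst e \<in> fst psi \<longrightarrow> (e \<in> Phi \<longleftrightarrow> e \<in> snd psi))"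

definition partial_realization :: "'a set \<Rightarrow> ('a \<times> 'a) set \<Rightarrow> 'a set \<times> ('a \<times> 'a) set \<Rightarrow> bool" where
  "partial_realization V Eu psi \<longleftrightarrow> fst psi \<subseteq> V \<and> snd psi \<subseteq> {e\<in>Eu. fst e \<in> fst psi}"

definition subrealization :: "'a set \<times> ('a \<times> 'a) set \<Rightarrow> 'a set \<times> ('a \<times> 'a) set \<Rightarrow> bool" where
  "subrealization psi psi' \<longleftrightarrow> fst psi \<subseteq> fst psi' \<and> snd psi = {e\<in>snd psi'. fst e \<in> fst psi}"

definition psi_prob :: "('a \<times> 'a) set \<Rightarrow> ('a \<times> 'a \<Rightarrow> real) \<Rightarrow> 'a set \<times> ('a \<times> 'a) set \<Rightarrow> real" where
  "psi_prob Eu u psi = (\<Sum>Phi\<in>{Phi\<in>Pow Eu. consistent Eu psi Phi}. real_prob Eu u Phi)"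

definition cond_marginal ::
  "'a set \<Rightarrow> ('a \<times> 'a) set \<Rightarrow> ('a \<times> 'a) set \<Rightarrow> ('a \<times> 'a \<Rightarrow> real) \<Rightarrow> ('a \<times> 'a \<Rightarrow> real) \<Rightarrow> nat
    \<Rightarrow> 'a \<Rightarrow> 'a set \<times> ('a \<times> 'a) set \<Rightarrow> real" where
  "cond_marginal V Ec Eu u p L v psi =
     (\<Sum>Phi\<in>{Phi\<in>Pow Eu. consistent Eu psi Phi}.
        real_prob Eu u Phi * (influence V Ec p L Phi (fst psi \<union> {v}) - influence V Ec p L Phi (fst psi)))
     / psi_prob Eu u psi"

definition uncertain_network ::
  "'a set \<Rightarrow> ('a \<times> 'a) set \<Rightarrow> ('a \<times> 'a) set \<Rightarrow> ('a \<times> 'a \<Rightarrow> real) \<Rightarrow> ('a \<times> 'a \<Rightarrow> real) \<Rightarrow> bool" where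
  "uncertain_network V Ec Eu u p \<longleftrightarrow>
     finite V \<and> Ec \<union> Eu \<subseteq> V \<times> V \<and> Ec \<inter> Eu = {} \<and>
     (\<forall>e\<in>Eu. 0 \<le> u e \<and> u e \<le> 1) \<and>
     (\<forall>e\<in>Ec \<union> Eu. 0 \<le> p e \<and> p e \<le> 1)"

end

theory Submission
  imports Defs
begin

definition nxt :: "'a set \<Rightarrow> ('a \<times> 'a) set \<Rightarrow> 'a set \<Rightarrow> 'a set" where
  "nxt V E A = A \<union> {y\<in>V. \<exists>x\<in>A. (x,y)\<in>E}"

lemma step_prob_one:
  assumes "finite A"
  shows "step_prob E (\<lambda>_. 1) A y = (if \<exists>x\<in>A. (x,y)\<in>E then 1 else 0)"
proof -
  have fin: "finite {x\<in>A. (x, y) \<in> E}" using assms by simp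
  show ?thesis
  proof (cases "\<exists>x\<in>A. (x,y)\<in>E")
    case True
    then obtain x where "x \<in> {x\<in>A. (x, y) \<in> E}" by auto
    then have "(\<Prod>x\<in>{x\<in>A. (x, y) \<in> E}. 1 - (1::real)) = 0"
      using fin by (intro prod_zero) auto
    then show ?thesis using True unfolding step_prob_def by simp
  next
    case False
    then have "{x\<in>A. (x, y) \<in> E} = {}" by auto
    then show ?thesis using False unfolding step_prob_def by (simp only:) simp
  qed
qed

lemma trans_det:
  assumes "finite V" "A \<subseteq> V"
  shows "trans_prob V E (\<lambda>_. 1) A B = (if B = nxt V E A then 1 else 0)"
proof -
  have fA: "finite A" using assms finite_subset by blast
  note sp = step_prob_one[OF fA]
  show ?thesis
  proof (cases "B = nxt V E A")
    case True
    then have sub: "A \<subseteq> B \<and> B \<subseteq> V" using assms by (auto simp: nxt_def)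
    have 1: "(\<Prod>y\<in>B - A. step_prob E (\<lambda>_. 1) A y) = 1"
      by (rule prod.neutral) (use True in \<open>auto simp: sp nxt_def\<close>)
    have 2: "(\<Prod>y\<in>V - B. 1 - step_prob E (\<lambda>_. 1) A y) = 1"
      by (rule prod.neutral) (use True in \<open>auto simp: sp nxt_def\<close>)
    show ?thesis using sub 1 2 True unfolding trans_prob_def by simp
  next
    case False
    show ?thesis
    proof (cases "A \<subseteq> B \<and> B \<subseteq> V")
      case False2: True
      have fB: "finite B" "finite (V - B)" using False2 assms finite_subset by auto
      from False False2 obtain y where
        y: "(y \<in> B - A \<and> \<not>(\<exists>x\<in>A. (x,y)\<in>E)) \<or> (y \<in> V - B \<and> (\<exists>x\<in>A. (x,y)\<in>E))"
        unfolding nxt_def by blast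
      then have "(\<Prod>y\<in>B - A. step_prob E (\<lambda>_. 1) A y) = 0 \<or>
                 (\<Prod>y\<in>V - B. 1 - step_prob E (\<lambda>_. 1) A y) = 0"
        using fB by (auto simp: sp prod_zero_iff)
      then show ?thesis using False False2 unfolding trans_prob_def by auto
    next
      case False3: False
      then show ?thesis using False unfolding trans_prob_def by auto
    qed
  qed
qed

lemma nxt_sub: "A \<subseteq> V \<Longrightarrow> nxt V E A \<subseteq> V"
  by (auto simp: nxt_def)

lemma iter_sub: "S \<subseteq> V \<Longrightarrow> (nxt V E ^^ t) S \<subseteq> V"
  by (induction t) (auto simp: nxt_sub)

lemma spread_det:
  assumes "finite V" "S \<subseteq> V"
  shows "spread_dist V E (\<lambda>_. 1) t S B = (if B = (nxt V E ^^ t) S then 1 else 0)"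
proof (induction t arbitrary: B)
  case 0 then show ?case by simp
next
  case (Suc t)
  let ?C = "(nxt V E ^^ t) S"
  have C: "?C \<in> Pow V" using iter_sub[OF assms(2)] by simp
  have "spread_dist V E (\<lambda>_. 1) (Suc t) S B =
        (\<Sum>A\<in>Pow V. (if A = ?C then trans_prob V E (\<lambda>_. 1) A B else 0))"
    unfolding spread_dist.simps Suc.IH by (intro sum.cong) auto
  also have "\<dots> = trans_prob V E (\<lambda>_. 1) ?C B"
    using C assms(1) by (simp add: sum.delta)
  also have "\<dots> = (if B = (nxt V E ^^ Suc t) S then 1 else 0)"
    using trans_det[OF assms(1)] iter_sub[OF assms(2)] by simp
  finally show ?case .
qed

lemma influence_det:
  assumes "finite V" "S \<subseteq> V"
  shows "influence V Ec (\<lambda>_. 1) L Phi S = real (card ((nxt V (Ec \<union> Phi) ^^ L) S))"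
proof -
  have C: "(nxt V (Ec \<union> Phi) ^^ L) S \<in> Pow V" using iter_sub[OF assms(2)] by simp
  have "(\<Sum>B\<in>Pow V. (if B = (nxt V (Ec \<union> Phi) ^^ L) S then 1 else 0) * real (card B))
     = (\<Sum>B\<in>Pow V. if B = (nxt V (Ec \<union> Phi) ^^ L) S then real (card B) else 0)"
    by (intro sum.cong) auto
  also have "\<dots> = real (card ((nxt V (Ec \<union> Phi) ^^ L) S))"
    using C assms(1) by (simp add: sum.delta)
  finally show ?thesis unfolding influence_def spread_det[OF assms] .
qed

lemma pow_Eu: "{Phi \<in> Pow {(1::nat,2::nat)}. Q Phi} =
   (if Q {} then {{}} else {}) \<union> (if Q {(1,2)} then {{(1,2)}} else {})"
  unfolding Pow_def by (auto simp: subset_singleton_iff)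

lemma fp2: "(f ^^ 2) x = f (f x)" by (simp add: numeral_2_eq_2)

theorem theorem3:
  shows "\<exists>(V :: nat set) Ec Eu u p (L :: nat) psi psi' v.
           uncertain_network V Ec Eu u p \<and>
           partial_realization V Eu psi \<and> partial_realization V Eu psi' \<and>
           subrealization psi psi' \<and> psi_prob Eu u psi' > 0 \<and> v \<in> V \<and>
           cond_marginal V Ec Eu u p L v psi < cond_marginal V Ec Eu u p L v psi'"
proof -
  define V :: "nat set" where "V = {0,1,2,3}"
  define Ec :: "(nat \<times> nat) set" where "Ec = {(0,1),(3,2)}"
  define Eu :: "(nat \<times> nat) set" where "Eu = {(1,2)}"
  define u :: "nat \<times> nat \<Rightarrow> real" where "u = (\<lambda>_. 1/2)"
  define psi :: "nat set \<times> (nat \<times> nat) set" where "psi = ({0}, {})"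
  define psi' :: "nat set \<times> (nat \<times> nat) set" where "psi' = ({0,1}, {})"
  have net: "uncertain_network V Ec Eu u (\<lambda>_. 1)"
    by (simp add: uncertain_network_def V_def Ec_def Eu_def u_def)
  have pr: "partial_realization V Eu psi" "partial_realization V Eu psi'"
    by (auto simp: partial_realization_def V_def Eu_def psi_def psi'_def)
  have sr: "subrealization psi psi'" by (auto simp: subrealization_def psi_def psi'_def)
  have c1: "{Phi\<in>Pow Eu. consistent Eu psi Phi} = {{}, {(1,2)}}"
    unfolding Eu_def pow_Eu by (auto simp: consistent_def psi_def)
  have c2: "{Phi\<in>Pow Eu. consistent Eu psi' Phi} = {{}}"
    unfolding Eu_def pow_Eu by (auto simp: consistent_def psi'_def)
  have rp: "real_prob Eu u {} = 1/2" "real_prob Eu u {(1,2)} = 1/2"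
    by (simp_all add: real_prob_def Eu_def u_def)
  have pp: "psi_prob Eu u psi' = 1/2" unfolding psi_prob_def c2 by (simp add: rp)
  have pp1: "psi_prob Eu u psi = 1" unfolding psi_prob_def c1 using rp by (simp del: One_nat_def)
  have fV: "finite V" by (simp add: V_def)
  note inf = influence_det[OF fV]
  have n: "nxt V Ec {0,3} = V" "nxt V (insert (1,2) Ec) {0,3} = V"
      "nxt V Ec V = V" "nxt V (insert (1,2) Ec) V = V"
      "nxt V Ec {0} = {0,1}" "nxt V Ec {0,1} = {0,1}"
      "nxt V (insert (1,2) Ec) {0} = {0,1}" "nxt V (insert (1,2) Ec) {0,1} = {0,1,2}"
      "nxt V Ec {0,1,3} = V"
    by (auto simp: nxt_def V_def Ec_def)
  have sV: "{0::nat,3} \<subseteq> V" "{0::nat} \<subseteq> V" "{0::nat,1} \<subseteq> V" "{0::nat,1,3} \<subseteq> V"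
    by (auto simp: V_def)
  have cV: "card V = 4" by (simp add: V_def)
  have f1: "influence V Ec (\<lambda>_. 1) 2 {} ({0} \<union> {3}) = 4"
    using inf[OF sV(1)] by (simp add: fp2 n cV insert_commute del: One_nat_def)
  have f2: "influence V Ec (\<lambda>_. 1) 2 {(1,2)} ({0} \<union> {3}) = 4"
    using inf[OF sV(1)] by (simp add: fp2 n cV insert_commute del: One_nat_def)
  have f3: "influence V Ec (\<lambda>_. 1) 2 {} {0} = 2"
    using inf[OF sV(2)] by (simp add: fp2 n del: One_nat_def)
  have f4: "influence V Ec (\<lambda>_. 1) 2 {(1,2)} {0} = 3"
    using inf[OF sV(2)] by (simp add: fp2 n del: One_nat_def)
  have f5: "influence V Ec (\<lambda>_. 1) 2 {} ({0,1} \<union> {3}) = 4"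
    proof -
    have e: "{0,1} \<union> {3} = {0::nat,1,3}" by auto
    show ?thesis unfolding e inf[OF sV(4)] by (simp add: fp2 n cV del: One_nat_def)
  qed
  have f6: "influence V Ec (\<lambda>_. 1) 2 {} {0,1} = 2"
    using inf[OF sV(3)] by (simp add: fp2 n del: One_nat_def)
  have m1: "cond_marginal V Ec Eu u (\<lambda>_. 1) 2 3 psi = 3/2"
    unfolding cond_marginal_def c1 pp1 using rp f1 f2 f3 f4
    by (simp add: psi_def del: One_nat_def)
  have m2: "cond_marginal V Ec Eu u (\<lambda>_. 1) 2 3 psi' = 2"
    unfolding cond_marginal_def c2 pp using rp f5 f6
    by (simp add: psi'_def del: One_nat_def)
  show ?thesis
    apply (rule exI[of _ V], rule exI[of _ Ec], rule exI[of _ Eu], rule exI[of _ u],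
           rule exI[of _ "\<lambda>_. 1"], rule exI[of _ 2], rule exI[of _ psi], rule exI[of _ psi'],
           rule exI[of _ 3])
    using net pr sr pp m1 m2 by (simp add: V_def)
qed

end
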